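(* Let $m\in\mathbb N$ and let $t$ be a finite rooted ordered tree with $\dim(t)=2m$. Then there are trees $t',t_1,\dots,t_n$ with $\dim(t'),\dim(t_1),\dots,\dim(t_n)\le m$ such that $t=t'[t_1,\dots,t_n]$.
   Context: The dimension of a finite rooted ordered tree is defined inductively: (i) if $t$ has no children, $\dim(t)=0$; (ii) if $t$ has exactly one child $t_1$, $\dim(t)=\dim(t_1)$; (iii) if $t$ has at least two children, let $t_1,t_2$ be children of highest dimension, i.e. $\dim(t_1)\ge\dim(t_2)$ and $\dim(t_2)\ge\dim(t'')$ for every child $t''\ne t_1$; then $\dim(t)=\dim(t_1)+1$ if $\dim(t_1)=\dim(t_2)$, and $\dim(t)=\dim(t_1)$ if $\dim(t_1)>\dim(t_2)$. If $t'$ is a tree with leaves $l_1,\dots,l_n$ (from left to right) and $t_1,\dots,t_n$ are trees, $t'[t_1,\dots,t_n]$ denotes the tree obtained from $t'$ by replacing each leaf $l_i$ with $t_i$. *)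

theory Defs
  imports Main
begin

datatype tree = Node "tree list"

fun children :: "tree \<Rightarrow> tree list" where
  "children (Node ts) = ts"

fun dim :: "tree \<Rightarrow> nat" where
  "dim (Node ts) =
     (case rev (sort (map dim ts)) of
        [] \<Rightarrow> 0
      | [d] \<Rightarrow> d
      | d1 # d2 # _ \<Rightarrow> (if d1 = d2 then d1 + 1 else d1))"

fun nleaves :: "tree \<Rightarrow> nat" where
  "nleaves (Node []) = 1"
| "nleaves (Node (c # cs)) = sum_list (map nleaves (c # cs))"

text \<open>Grafting: replace the leaves of a tree from left to right by the trees in a list;
  returns the resulting tree and the unused rest of the list.\<close>
fun graft :: "tree \<Rightarrow> tree list \<Rightarrow> tree \<times> tree list"
and graft_list :: "tree list \<Rightarrow> tree list \<Rightarrow> tree list \<times> tree list" where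
  "graft (Node []) [] = (Node [], [])"
| "graft (Node []) (s # ss) = (s, ss)"
| "graft (Node (c # cs)) ss = (let (cs', ss') = graft_list (c # cs) ss in (Node cs', ss'))"
| "graft_list [] ss = ([], ss)"
| "graft_list (c # cs) ss =
     (let (c', ss1) = graft c ss; (cs', ss2) = graft_list cs ss1 in (c' # cs', ss2))"

text \<open>t'[t_1,...,t_n], meaningful when n equals the number of leaves of t'.\<close>
definition subst :: "tree \<Rightarrow> tree list \<Rightarrow> tree" where
  "subst t' ts = fst (graft t' ts)"

end

theory Submission
  imports Defs "HOL-Library.Multiset"
begin

lemma desc_char:
  fixes S :: "nat list"
  assumes "sorted_wrt (\<lambda>x y. y \<le> x) S"
  shows "((case S of [] \<Rightarrow> 0 | [d] \<Rightarrow> d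
          | d1 # d2 # _ \<Rightarrow> (if d1 = d2 then d1 + 1 else d1)) \<le> k)
        \<longleftrightarrow> (\<forall>x\<in>set S. x \<le> k) \<and> length (filter ((=) k) S) \<le> 1"
proof (cases S)
  case Nil then show ?thesis by simp
next
  case (Cons d1 S')
  show ?thesis
  proof (cases S')
    case Nil then show ?thesis using Cons by auto
  next
    case (Cons d2 rest)
    have s: "d2 \<le> d1" "\<forall>x\<in>set rest. x \<le> d2" "\<forall>x\<in>set rest. x \<le> d1"
      using assms \<open>S = d1 # S'\<close> Cons by auto
    have f: "d2 < k \<Longrightarrow> filter ((=) k) rest = []" using s(2)
      by (auto simp: filter_empty_conv)
    show ?thesis
    proof (cases "d1 = d2")
      case True
      then show ?thesis using \<open>S = d1 # S'\<close> Cons s f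
        by (cases "d2 < k") auto
    next
      case False
      then show ?thesis using \<open>S = d1 # S'\<close> Cons s f
        by (cases "d2 < k") auto
    qed
  qed
qed

lemma dim_le_iff:
  "dim (Node ts) \<le> k \<longleftrightarrow> (\<forall>c\<in>set ts. dim c \<le> k) \<and> length (filter (\<lambda>c. dim c = k) ts) \<le> 1"
proof -
  let ?L = "map dim ts"
  let ?S = "rev (sort ?L)"
  have srt: "sorted_wrt (\<lambda>x y. y \<le> x) ?S"
    by (simp add: sorted_wrt_rev)
  have ms: "mset ?S = mset ?L" by simp
  have st: "set ?S = set ?L" by simp
  have fl: "length (filter ((=) k) ?S) = length (filter ((=) k) ?L)"
    by (metis ms mset_filter size_mset)
  have "dim (Node ts) \<le> k \<longleftrightarrow> (\<forall>x\<in>set ?S. x \<le> k) \<and> length (filter ((=) k) ?S) \<le> 1"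
    using desc_char[OF srt, of k] by simp
  also have "\<dots> \<longleftrightarrow> (\<forall>c\<in>set ts. dim c \<le> k) \<and> length (filter (\<lambda>c. dim c = k) ts) \<le> 1"
    unfolding st fl by (simp add: filter_map comp_def eq_commute)
  finally show ?thesis .
qed

lemma length_filter_mono':
  "(\<forall>x\<in>set xs. P x \<longrightarrow> Q x) \<Longrightarrow> length (filter P xs) \<le> length (filter Q xs)"
  by (induction xs) auto

fun top :: "nat \<Rightarrow> tree \<Rightarrow> tree" where
  "top m (Node cs) = (if dim (Node cs) \<le> m then Node [] else Node (map (top m) cs))"

fun bots :: "nat \<Rightarrow> tree \<Rightarrow> tree list" where
  "bots m (Node cs) = (if dim (Node cs) \<le> m then [Node cs] else concat (map (bots m) cs))"

declare top.simps[simp del] bots.simps[simp del]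

lemma graft_list_aux:
  assumes "\<forall>c\<in>set cs. \<forall>r. graft (top m c) (bots m c @ r) = (c, r)"
  shows "graft_list (map (top m) cs) (concat (map (bots m) cs) @ rest) = (cs, rest)"
  using assms by (induction cs arbitrary: rest) auto

lemma graft_top: "graft (top m t) (bots m t @ rest) = (t, rest)"
proof (induction m t arbitrary: rest rule: top.induct)
  case (1 m cs)
  show ?case
  proof (cases "dim (Node cs) \<le> m")
    case True then show ?thesis by (simp add: top.simps bots.simps)
  next
    case False
    then obtain c cs' where cs: "cs = c # cs'" by (cases cs) auto
    have "graft_list (map (top m) cs) (concat (map (bots m) cs) @ rest) = (cs, rest)"
      using graft_list_aux 1 False by blast
    then show ?thesis using False cs by (simp add: top.simps bots.simps)
  qed
qed

lemma len_bots: "length (bots m t) = nleaves (top m t)"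
proof (induction m t rule: top.induct)
  case (1 m cs)
  show ?case
  proof (cases "dim (Node cs) \<le> m")
    case True then show ?thesis by (simp add: top.simps bots.simps)
  next
    case False
    then obtain c cs' where cs: "cs = c # cs'" by (cases cs) auto
    have "sum_list (map (\<lambda>c. length (bots m c)) cs) = sum_list (map (\<lambda>c. nleaves (top m c)) cs)"
      by (rule arg_cong[where f=sum_list], rule map_cong) (use 1 False in auto)
    then show ?thesis using False cs by (simp add: top.simps bots.simps length_concat comp_def)
  qed
qed

lemma dim_bots: "\<forall>s\<in>set (bots m t). dim s \<le> m"
  by (induction m t rule: top.induct) (auto simp: bots.simps)

lemma dim_top: "dim (top m t) \<le> dim t - m"
proof (induction m t rule: top.induct)
  case (1 m cs)
  let ?d = "dim (Node cs)"
  show ?case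
  proof (cases "?d \<le> m")
    case True then show ?thesis by (simp add: top.simps)
  next
    case False
    have ch: "\<forall>c\<in>set cs. dim c \<le> ?d" "length (filter (\<lambda>c. dim c = ?d) cs) \<le> 1"
      using dim_le_iff[of cs ?d] by auto
    have a: "\<forall>c\<in>set cs. dim (top m c) \<le> ?d - m"
      using 1 False ch(1) by (meson diff_le_mono order_trans)
    have b: "\<forall>c\<in>set cs. dim (top m c) = ?d - m \<longrightarrow> dim c = ?d"
    proof (intro ballI impI)
      fix c assume c: "c \<in> set cs" and e: "dim (top m c) = ?d - m"
      have "dim (top m c) \<le> dim c - m" using 1 False c by blast
      moreover have "dim c \<le> ?d" using ch(1) c by blast
      ultimately show "dim c = ?d" using e False by linarith
    qed
    have "length (filter (\<lambda>c. dim c = ?d - m) (map (top m) cs))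
          = length (filter (\<lambda>c. dim (top m c) = ?d - m) cs)"
      by (simp add: filter_map comp_def)
    also have "\<dots> \<le> length (filter (\<lambda>c. dim c = ?d) cs)"
      using b by (intro length_filter_mono') auto
    finally have "length (filter (\<lambda>c. dim c = ?d - m) (map (top m) cs)) \<le> 1" using ch(2) by simp
    then have "dim (Node (map (top m) cs)) \<le> ?d - m"
      using a dim_le_iff[of "map (top m) cs" "?d - m"] by auto
    then show ?thesis using False by (simp add: top.simps)
  qed
qed

theorem lemma5:
  fixes m :: nat and t :: tree
  assumes "dim t = 2 * m"
  shows "\<exists>t' ts. length ts = nleaves t' \<and> dim t' \<le> m \<and> (\<forall>s\<in>set ts. dim s \<le> m)
                 \<and> t = subst t' ts"
proof (intro exI conjI)
  show "length (bots m t) = nleaves (top m t)" by (rule len_bots)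
  show "dim (top m t) \<le> m" using dim_top[of m t] assms by simp
  show "\<forall>s\<in>set (bots m t). dim s \<le> m" by (rule dim_bots)
  show "t = subst (top m t) (bots m t)"
    using graft_top[of m t "[]"] by (simp add: subst_def)
qed

end
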